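(* For the coprime hider strategy $y$ and every $v\in V\setminus\{1\}$, $y(C(T_v))\le h/w$.
   Context: $G$ is the path graph with $V=\{0,\dots,n-1\}$ and edges $\{v,v+1\}$; $k\ge2$, $n>2^k$, $c=2^k-2$ with $\gcd(c,n-1)=1$; $h,w$ are the positive integers with $h(n-1)-wc=1$ and $w\in\{1,\dots,n-2\}$ minimal. A search strategy for a tree $H$ is a rooted binary tree defined recursively: a single node is a search strategy for any $H$; otherwise the root is labeled with an edge $uv$ of $H$ and its two child subtrees are search strategies for the components $H_u,H_v$ of $H-uv$ containing $u,v$. Nodes get vertex sets: the root gets $V(H)$, the children of a root labeled $uv$ get $V(H_u),V(H_v)$, recursively. $C(T)$ is the set of $v$ with $V(\lambda)=\{v\}$ for a leaf $\lambda$; $\mathcal{T}_k$ is the set of search strategies of height at most $k$. $[u\oplus\ell]=\{w\bmod n: u\le w\le u+\ell-1\}$, $[a,b]=\{a,\dots,b\}$. For $v\in V\setminus\{1\}$, $T_v\in\mathcal{T}_k$ is any strategy with $C(T_v)=[v\oplus(c+1)]$ if this interval meets $\{0,n-1\}$ and $C(T_v)=[v\oplus c]$ otherwise. $y(S)=\sum_{i\in S}y_i$. Coprime hider strategy: $g(v)=v\frac{h}{wc}$, $r=\lfloor c/h\rfloor$; $y_0=y_{n-1}=0$; starting at $v=1$, repeatedly choose the largest $r^*\in\{r,r+1\}$ with $g(v+r^*-1)\le y([1,v-1])+\frac1w$, set $y_i=\frac{1}{r^*w}$ for $i\in\{v,\dots,v+r^*-1\}$, replace $v$ by $v+r^*$;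 stop when $v>n-2$. *)

theory Defs
  imports Complex_Main
begin

definition cyc_interval :: "nat \<Rightarrow> nat \<Rightarrow> nat \<Rightarrow> nat set" where
  "cyc_interval n u l = {x mod n | x. u \<le> x \<and> x + 1 \<le> u + l}"

definition CT :: "nat \<Rightarrow> nat \<Rightarrow> nat \<Rightarrow> nat set" where
  "CT n c v = (if cyc_interval n v (c + 1) \<inter> {0, n - 1} \<noteq> {}
               then cyc_interval n v (c + 1) else cyc_interval n v c)"

definition gfun :: "nat \<Rightarrow> nat \<Rightarrow> nat \<Rightarrow> nat \<Rightarrow> real" where
  "gfun c h w v = real v * real h / (real w * real c)"

definition rstar :: "nat \<Rightarrow> nat \<Rightarrow> nat \<Rightarrow> nat \<Rightarrow> real \<Rightarrow> nat" where
  "rstar c h w v S =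
     (let r = nat \<lfloor>real c / real h\<rfloor> in
      if gfun c h w (v + (r + 1) - 1) \<le> S + 1 / real w then r + 1 else r)"

text \<open>State after j blocks of the greedy procedure: (current v, y([1,v-1])).\<close>
fun hrun :: "nat \<Rightarrow> nat \<Rightarrow> nat \<Rightarrow> nat \<Rightarrow> nat \<times> real" where
  "hrun c h w 0 = (1, 0)"
| "hrun c h w (Suc j) =
     (let (v, S) = hrun c h w j; rs = rstar c h w v S
      in (v + rs, S + (\<Sum>i\<in>{v..<v + rs}. 1 / (real rs * real w))))"

text \<open>Block j is actually created iff its start v satisfies v <= n-2 (stop when v > n-2).\<close>
definition block_of :: "nat \<Rightarrow> nat \<Rightarrow> nat \<Rightarrow> nat \<Rightarrow> nat \<Rightarrow> nat \<Rightarrow> bool" where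
  "block_of n c h w i j =
     (let (v, S) = hrun c h w j in v \<le> n - 2 \<and> v \<le> i \<and> i < v + rstar c h w v S)"

definition hider_y :: "nat \<Rightarrow> nat \<Rightarrow> nat \<Rightarrow> nat \<Rightarrow> nat \<Rightarrow> real" where
  "hider_y n c h w i =
     (if 1 \<le> i \<and> i \<le> n - 2 \<and> (\<exists>j. block_of n c h w i j)
      then (let j = (SOME j. block_of n c h w i j);
                (v, S) = hrun c h w j
            in 1 / (real (rstar c h w v S) * real w))
      else 0)"

end

theory Submission
  imports Defs
begin



locale hs =
  fixes n c h w :: nat
  assumes c2: "c \<ge> 2" and nc: "c + 3 \<le> n" and hpos: "h > 0" and w1: "1 \<le> w"
    and wn: "w \<le> n - 2" and eq: "h * (n - 1) = w * c + 1"
begin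

definition "P j = j * c div h"
definition "r = c div h"
definition "ell j = P (Suc j) - P j"
definition "blk i = (i * h - 1) div c"
definition "u i = 1 / (real w * real (ell (blk i)))"

lemma h_lt_c: "h < c"
proof -
  have a: "w * c \<le> (n - 2) * c" using wn by simp
  have n1: "n - 1 = Suc (n - 2)" using nc by simp
  have b: "(n - 1) * c = (n - 2) * c + c" unfolding n1 by simp
  have "w * c + 1 < (n - 1) * c" using a b c2 by linarith
  then have "h * (n - 1) < c * (n - 1)" using eq by (simp add: mult.commute)
  then show ?thesis by simp
qed

lemma r_pos: "r \<ge> 1" using h_lt_c hpos by (simp add: r_def Suc_le_eq div_greater_zero_iff)

lemma w_gt_h: "h < w"
proof -
  have "c + 2 \<le> n - 1" using nc by simp
  then have "h * (c + 2) \<le> h * (n - 1)" by (rule mult_le_mono2)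
  then have "h * c + 2 * h \<le> w * c + 1" using eq by (simp add: algebra_simps)
  then have "h * c < w * c" using hpos by linarith
  then show ?thesis by simp
qed

lemma cop: "coprime h c"
proof -
  have d1: "gcd h c dvd w * c + 1" unfolding eq[symmetric] by simp
  have d2: "gcd h c dvd w * c" by simp
  have "gcd h c dvd 1" using d1 d2 dvd_add_right_iff by blast
  then show ?thesis by (simp add: coprime_iff_gcd_eq_1)
qed

lemma rh: "r * h \<le> c" "c < (r + 1) * h"
proof -
  have "c = r * h + c mod h" by (simp add: r_def)
  moreover have "c mod h < h" using hpos by simp
  ultimately show "r * h \<le> c" "c < (r + 1) * h" by (linarith, simp add: algebra_simps)
qed

lemma ell_eq: "ell j = r + (j * c mod h + c mod h) div h"
proof -
  have "Suc j * c = j * c + c" by simp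
  then have "P (Suc j) = P j + r + (j * c mod h + c mod h) div h"
    unfolding P_def r_def using div_add1_eq[of "j * c" c h] by (simp add: algebra_simps)
  then show ?thesis unfolding ell_def by simp
qed

lemma ell_bounds: "r \<le> ell j" "ell j \<le> r + 1"
proof -
  have "(j * c mod h + c mod h) < 2 * h" using hpos
    using mod_less_divisor[OF hpos, of "j*c"] mod_less_divisor[OF hpos, of c] by linarith
  then have "(j * c mod h + c mod h) div h \<le> 1" using hpos
    by (simp add: div_less_iff_less_mult less_Suc_eq_le[symmetric])
  then show "r \<le> ell j" "ell j \<le> r + 1" by (auto simp: ell_eq)
qed

lemma ell_pos: "ell j \<ge> 1" using ell_bounds r_pos by (meson le_trans)

lemma P_mono: "P j \<le> P (Suc j)" unfolding P_def by (simp add: div_le_mono)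

lemma P_le_iff: "i \<le> P j \<longleftrightarrow> i * h \<le> j * c"
  unfolding P_def using hpos by (simp add: less_eq_div_iff_mult_less_eq)

lemma lt_suc_div: "x < c * Suc (x div c)"
proof -
  have "x = c * (x div c) + x mod c" by simp
  moreover have "x mod c < c" using c2 by simp
  ultimately show ?thesis by (simp only: mult_Suc_right)
qed

lemma blk_char: assumes "i \<ge> 1" shows "(P j < i \<and> i \<le> P (Suc j)) \<longleftrightarrow> j = blk i"
proof -
  have "(P j < i \<and> i \<le> P (Suc j)) \<longleftrightarrow> (j * c < i * h \<and> i * h \<le> Suc j * c)"
    using P_le_iff[of i j] P_le_iff[of i "Suc j"] by (simp only: not_le[symmetric])
  also have "\<dots> \<longleftrightarrow> (c * j \<le> i * h - 1 \<and> i * h - 1 < c * Suc j)"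
  proof -
    have q: "i * h \<ge> 1" using assms hpos by simp
    have gen: "\<And>A q. 1 \<le> q \<Longrightarrow> (A < q \<and> q \<le> c + A) = (A \<le> q - 1 \<and> q - 1 < c + A)" for q A :: nat
      by linarith
    show ?thesis using gen[OF q, of "j * c"] by (simp add: algebra_simps)
  qed
  also have "\<dots> \<longleftrightarrow> j = blk i"
  proof
    assume a: "c * j \<le> i * h - 1 \<and> i * h - 1 < c * Suc j"
    show "j = blk i" unfolding blk_def using div_nat_eqI[of c j "i * h - 1"] a by simp
  next
    assume "j = blk i"
    then have j: "j = (i * h - 1) div c" by (simp add: blk_def)
    have "c * j \<le> i * h - 1" unfolding j by (simp add: times_div_less_eq_dividend)
    moreover have "i * h - 1 < c * Suc j" unfolding j
      by (rule lt_suc_div)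
    ultimately show "c * j \<le> i * h - 1 \<and> i * h - 1 < c * Suc j" by simp
  qed
  finally show ?thesis .
qed

end


context hs begin

lemma P_add: "P (j + h) = P j + c"
proof -
  have "(j + h) * c = j * c + c * h" by (simp add: algebra_simps)
  then show ?thesis unfolding P_def using hpos by simp
qed

lemma ell_per: "ell (j + h) = ell j"
  unfolding ell_def using P_add[of j] P_add[of "Suc j"] by simp

lemma blk_per: assumes "i \<ge> 1" shows "blk (i + c) = blk i + h"
proof -
  have "i * h \<ge> 1" using assms hpos by simp
  then have "(i + c) * h - 1 = (i * h - 1) + h * c" by (simp add: algebra_simps)
  then show ?thesis unfolding blk_def using c2 by simp
qed

lemma u_per: "i \<ge> 1 \<Longrightarrow> u (i + c) = u i"
  by (simp add: u_def blk_per ell_per)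

lemma P_mono': "j \<le> k \<Longrightarrow> P j \<le> P k"
  unfolding P_def by (simp add: div_le_mono)

lemma P0: "P 0 = 0" by (simp add: P_def)
lemma Ph: "P h = c" using hpos by (simp add: P_def)

lemma u_block: assumes "P j < i" "i \<le> P (Suc j)" shows "u i = 1 / (real w * real (ell j))"
proof -
  have "i \<ge> 1" using assms by simp
  then have "j = blk i" using blk_char assms by blast
  then show ?thesis by (simp add: u_def)
qed

lemma sum_block: "(\<Sum>i\<in>{Suc (P j)..<Suc (P (Suc j))}. u i) = 1 / real w"
proof -
  have "(\<Sum>i\<in>{Suc (P j)..<Suc (P (Suc j))}. u i) = (\<Sum>i\<in>{Suc (P j)..<Suc (P (Suc j))}. 1 / (real w * real (ell j)))"
    by (rule sum.cong) (auto intro: u_block)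
  also have "\<dots> = real (ell j) * (1 / (real w * real (ell j)))"
    by (simp add: ell_def)
  also have "\<dots> = 1 / real w" using ell_pos[of j] by simp
  finally show ?thesis .
qed

lemma sum_blocks: "(\<Sum>i\<in>{1..<Suc (P j)}. u i) = real j / real w"
proof (induction j)
  case 0
  then show ?case by (simp add: P0)
next
  case (Suc j)
  have "(\<Sum>i\<in>{1..<Suc (P (Suc j))}. u i) = (\<Sum>i\<in>{1..<Suc (P j)}. u i) + (\<Sum>i\<in>{Suc (P j)..<Suc (P (Suc j))}. u i)"
    using sum.atLeastLessThan_concat[of 1 "Suc (P j)" "Suc (P (Suc j))" u] P_mono[of j] by simp
  also have "\<dots> = real (Suc j) / real w" using Suc sum_block by (simp add: add_divide_distrib)
  finally show ?case .
qed

lemma sum_period: "(\<Sum>i\<in>{1..<Suc c}. u i) = real h / real w"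
  using sum_blocks[of h] Ph by simp

lemma window: "v \<ge> 1 \<Longrightarrow> (\<Sum>i\<in>{v..<v + c}. u i) = real h / real w"
proof -
  have "(\<Sum>i\<in>{Suc k..<Suc k + c}. u i) = real h / real w" for k
  proof (induction k)
    case 0
    then show ?case using sum_period by simp
  next
    case (Suc k)
    have a: "(\<Sum>i\<in>{Suc k..<Suc k + c}. u i) = u (Suc k) + (\<Sum>i\<in>{Suc (Suc k)..<Suc k + c}. u i)"
      using c2 by (intro sum.atLeast_Suc_lessThan) simp
    have b: "(\<Sum>i\<in>{Suc (Suc k)..<Suc (Suc k) + c}. u i) = (\<Sum>i\<in>{Suc (Suc k)..<Suc k + c}. u i) + u (Suc k + c)"
      using c2 sum.atLeastLessThan_Suc[of "Suc (Suc k)" "Suc k + c" u] by simp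
    have "u (Suc k + c) = u (Suc k)" using u_per[of "Suc k"] by simp
    then show ?case using a b Suc by simp
  qed
  moreover assume "v \<ge> 1"
  then obtain k where "v = Suc k" by (cases v) auto
  ultimately show ?thesis by simp
qed

lemma rstar_eq: "rstar c h w (P j + 1) (real j / real w) = ell j"
proof -
  have rr: "nat \<lfloor>real c / real h\<rfloor> = r" by (simp add: r_def floor_divide_of_nat_eq)
  have pos: "0 < real w * real c" using w1 c2 by simp
  have g: "gfun c h w (P j + 1 + (r + 1) - 1) = real ((P j + 1 + r) * h) / (real w * real c)"
    by (simp add: gfun_def algebra_simps)
  have s: "real j / real w + 1 / real w = real (Suc j * c) / (real w * real c)"
    using w1 c2 by (simp add: field_simps)
  have iff: "gfun c h w (P j + 1 + (r + 1) - 1) \<le> real j / real w + 1 / real w \<longleftrightarrow> P j + 1 + r \<le> P (Suc j)"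
  proof -
    have d: "\<And>x y::real. x / (real w * real c) \<le> y / (real w * real c) \<longleftrightarrow> x \<le> y"
      using pos by (simp add: divide_le_cancel)
    have "gfun c h w (P j + 1 + (r + 1) - 1) \<le> real j / real w + 1 / real w \<longleftrightarrow> (P j + 1 + r) * h \<le> Suc j * c"
      unfolding g s d by (simp only: of_nat_le_iff)
    also have "\<dots> \<longleftrightarrow> P j + 1 + r \<le> P (Suc j)" using P_le_iff by simp
    finally show ?thesis .
  qed
  have "P j + 1 + r \<le> P (Suc j) \<longleftrightarrow> ell j = r + 1"
    using ell_bounds[of j] P_mono[of j] unfolding ell_def by linarith
  then show ?thesis unfolding rstar_def Let_def rr using iff ell_bounds[of j] by auto
qed

lemma rstar_eq': "rstar c h w (Suc (P j)) (real j / real w) = ell j"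
  using rstar_eq by simp

lemma hrun_eq: "hrun c h w j = (P j + 1, real j / real w)"
proof (induction j)
  case 0
  then show ?case by (simp add: P0)
next
  case (Suc j)
  have sum: "(\<Sum>i\<in>{P j + 1..<P j + 1 + ell j}. 1 / (real (ell j) * real w)) = 1 / real w"
    using ell_pos[of j] by simp
  have e: "P j + 1 + ell j = P (Suc j) + 1" using P_mono[of j] by (simp add: ell_def)
  show ?case
    using Suc sum e ell_pos[of j] by (simp add: rstar_eq' Let_def add_divide_distrib)
qed

lemma block_of_iff: assumes "1 \<le> i" "i \<le> n - 2" shows "block_of n c h w i j \<longleftrightarrow> j = blk i"
proof -
  have "block_of n c h w i j \<longleftrightarrow> (P j + 1 \<le> n - 2 \<and> P j + 1 \<le> i \<and> i < P j + 1 + ell j)"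
    by (simp add: block_of_def hrun_eq rstar_eq')
  also have "\<dots> \<longleftrightarrow> P j < i \<and> i \<le> P (Suc j)"
    using assms P_mono[of j] by (auto simp: ell_def)
  also have "\<dots> \<longleftrightarrow> j = blk i" using blk_char assms by simp
  finally show ?thesis .
qed

lemma y_eq: "hider_y n c h w i = (if 1 \<le> i \<and> i \<le> n - 2 then u i else 0)"
proof (cases "1 \<le> i \<and> i \<le> n - 2")
  case True
  then have bi: "\<And>j. block_of n c h w i j \<longleftrightarrow> j = blk i" using block_of_iff by blast
  have "hider_y n c h w i = 1 / (real (rstar c h w (P (blk i) + 1) (real (blk i) / real w)) * real w)"
    using True unfolding hider_y_def bi by (simp add: hrun_eq Let_def)
  also have "\<dots> = u i" using w1 by (simp add: rstar_eq' u_def mult.commute)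
  finally show ?thesis using True by simp
next
  case False
  then have "\<not> (1 \<le> i \<and> i \<le> n - 2 \<and> (\<exists>j. block_of n c h w i j))" by blast
  then show ?thesis using False unfolding hider_y_def by (simp only: if_False if_not_P)
qed

end


context hs begin

lemma u_upper: "u i \<le> 1 / (real r * real w)"
proof -
  have "r * w \<le> w * ell (blk i)" using ell_bounds[of "blk i"] by (simp add: mult.commute)
  then have "real r * real w \<le> real w * real (ell (blk i))" by (metis of_nat_le_iff of_nat_mult)
  moreover have "0 < real r * real w" using r_pos w1 by simp
  ultimately show ?thesis unfolding u_def by (intro frac_le) auto
qed

lemma u_lower: "1 / ((real r + 1) * real w) \<le> u i"
proof -
  have "ell (blk i) * w \<le> (r + 1) * w" using ell_bounds(2)[of "blk i"] by (rule mult_le_mono1)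
  then have "real (ell (blk i) * w) \<le> real ((r + 1) * w)" by (simp only: of_nat_le_iff)
  then have "real w * real (ell (blk i)) \<le> (real r + 1) * real w" by (simp add: algebra_simps)
  moreover have "0 < real w * real (ell (blk i))" using ell_pos[of "blk i"] w1 by simp
  ultimately show ?thesis unfolding u_def by (intro frac_le) auto
qed

lemma u_nonneg: "0 \<le> u i" by (simp add: u_def)

lemma eq2: "(n - 1 - c) * h = (w - h) * c + 1"
proof -
  have a: "(n - 1 - c) * h = (n - 1) * h - c * h" by (simp add: diff_mult_distrib)
  have b: "(w - h) * c = w * c - h * c" by (simp add: diff_mult_distrib)
  have e: "(n - 1) * h = w * c + 1" using eq by (simp add: mult.commute)
  have f: "c * h \<le> c * w" using w_gt_h by simp
  show ?thesis using a b e f by (simp add: mult.commute Suc_diff_le)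
qed

lemma ell_shift: assumes "j + 1 < h" shows "ell j \<le> ell (j + (w - h))"
proof -
  define j' where "j' = j + (w - h)"
  have "j' * c + 1 = j * c + (w - h) * c + 1" by (simp add: j'_def algebra_simps)
  also have "\<dots> = j * c + (n - 1 - c) * h" using eq2 by simp
  finally have "(j' * c + 1) mod h = j * c mod h" by simp
  then have key: "(j' * c mod h + 1) mod h = j * c mod h" by (simp add: mod_Suc_eq)
  have lt: "j' * c mod h < h" using hpos by simp
  show ?thesis
  proof (cases "j' * c mod h + 1 = h")
    case True
    then have "j * c mod h = 0" using key by simp
    then have "ell j = r" using ell_eq[of j] hpos by simp
    then show ?thesis using ell_bounds[of "j + (w - h)"] by simp
  next
    case False
    then have rho: "j * c mod h = j' * c mod h + 1" using key lt by simp
    have ne: "j * c mod h + c mod h \<noteq> h"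
    proof
      assume a: "j * c mod h + c mod h = h"
      have "(j * c + c) mod h = (j * c mod h + c mod h) mod h" by (simp add: mod_add_eq)
      then have "(Suc j * c) mod h = 0" using a by (simp add: add.commute)
      then have "h dvd Suc j * c" by (simp add: mod_eq_0_iff_dvd)
      then have "h dvd Suc j" using cop coprime_dvd_mult_left_iff[of h c "Suc j"] by simp
      then have "h \<le> Suc j" by (simp add: dvd_imp_le)
      then show False using assms by simp
    qed
    have "(j * c mod h + c mod h) div h \<le> (j' * c mod h + c mod h) div h"
    proof (cases "j * c mod h + c mod h < h")
      case True
      then show ?thesis by simp
    next
      case False
      then have "h \<le> j' * c mod h + c mod h" using rho ne by simp
      then have "1 \<le> (j' * c mod h + c mod h) div h" using hpos by (simp add: less_eq_div_iff_mult_less_eq)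
      moreover have "(j * c mod h + c mod h) div h \<le> 1"
        using ell_bounds[of j] ell_eq[of j] by simp
      ultimately show ?thesis by simp
    qed
    then show ?thesis unfolding j'_def[symmetric] using ell_eq[of j] ell_eq[of j'] by simp
  qed
qed

lemma not_dvd_xh: assumes "1 \<le> x" "x < c" shows "\<not> c dvd x * h"
proof
  assume "c dvd x * h"
  then have "c dvd x" using cop by (simp add: coprime_commute coprime_dvd_mult_left_iff)
  then have "c \<le> x" using assms by (simp add: dvd_imp_le)
  then show False using assms by simp
qed

lemma pointwise: assumes "r \<le> s" "s \<le> c - 2" shows "u (n - 2 - s) \<le> u (c - 1 - s)"
proof -
  define x where "x = c - 1 - s"
  have x1: "1 \<le> x" using assms c2 by (simp add: x_def)
  have xc: "x \<le> c - 1 - r" using assms by (simp add: x_def)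
  have y: "n - 2 - s = x + (n - 1 - c)" using assms nc c2 by (simp add: x_def)
  have xh: "x * h \<ge> 1" using x1 hpos by simp
  have "(x + (n - 1 - c)) * h - 1 = (x * h - 1) + (w - h) * c + 1"
    using eq2 xh by (simp add: algebra_simps)
  then have "(x + (n - 1 - c)) * h - 1 = x * h + (w - h) * c" using xh by simp
  then have b1: "blk (x + (n - 1 - c)) = x * h div c + (w - h)"
    unfolding blk_def using c2 by simp
  have "x < c" using x1 xc by simp
  then have nd: "\<not> c dvd x * h" using not_dvd_xh x1 by simp
  have "x * h div c = (x * h - 1) div c"
  proof -
    have "x * h = Suc (x * h - 1)" using xh by simp
    then show ?thesis using div_Suc[of "x * h - 1" c] nd by (metis mod_eq_0_iff_dvd)
  qed
  then have bb: "blk (x + (n - 1 - c)) = blk x + (w - h)" using b1 by (simp add: blk_def)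
  have "blk x + 1 < h"
  proof -
    have e1: "(c - 1 - r) * h + (r + 1) * h = c * h"
    proof -
      have "c - 1 - r + (r + 1) = c" using xc x1 by simp
      then show ?thesis by (metis add_mult_distrib)
    qed
    have "x * h \<le> (c - 1 - r) * h" using xc by simp
    then have "x * h + c < c * h" using e1 rh(2) by linarith
    moreover have "(h - 1) * c = h * c - c" by (simp add: diff_mult_distrib)
    ultimately have "x * h - 1 < (h - 1) * c" using xh by (simp add: mult.commute)
    then have "(x * h - 1) div c < h - 1" using c2 by (simp add: div_less_iff_less_mult)
    then show ?thesis unfolding blk_def by simp
  qed
  then have le: "ell (blk x) \<le> ell (blk (x + (n - 1 - c)))" using ell_shift bb by simp
  have "real w * real (ell (blk x)) \<le> real w * real (ell (blk (x + (n - 1 - c))))"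
    using le by (intro mult_left_mono) auto
  moreover have "0 < real w * real (ell (blk x))" using ell_pos[of "blk x"] w1 by simp
  ultimately have "u (x + (n - 1 - c)) \<le> u x" unfolding u_def by (intro frac_le) auto
  then show ?thesis using y by (simp add: x_def)
qed

end



lemma reindex_rev: "m \<le> Suc a \<Longrightarrow> (\<Sum>t<m. f (a - t)) = (\<Sum>i\<in>{Suc a - m..<Suc a}. (f i :: real))"
proof (induction m)
  case 0
  then show ?case by simp
next
  case (Suc m)
  have "(\<Sum>i\<in>{a - m..<Suc a}. f i) = f (a - m) + (\<Sum>i\<in>{Suc (a - m)..<Suc a}. f i)"
    by (intro sum.atLeast_Suc_lessThan) simp
  moreover have "Suc (a - m) = Suc a - m" using Suc.prems by simp
  ultimately show ?case using Suc by simp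
qed

lemma cyc_image: "cyc_interval n v L = (\<lambda>x. x mod n) ` {v..<v + L}"
  unfolding cyc_interval_def by (auto simp: image_def)

lemma cyc_id: assumes "v + L \<le> n" shows "cyc_interval n v L = {v..<v + L}"
proof -
  have "(\<lambda>x. x mod n) ` {v..<v + L} = (\<lambda>x. x) ` {v..<v + L}"
    by (rule image_cong) (use assms in auto)
  then show ?thesis by (simp add: cyc_image)
qed

lemma cyc_wrap: assumes "v < n" "L \<le> n" shows "cyc_interval n v L \<subseteq> {v..<n} \<union> {0..<v + L - n}"
proof
  fix y assume "y \<in> cyc_interval n v L"
  then obtain x where x: "y = x mod n" "v \<le> x" "x < v + L" by (auto simp: cyc_image)
  show "y \<in> {v..<n} \<union> {0..<v + L - n}"
  proof (cases "x < n")
    case True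
    then show ?thesis using x by simp
  next
    case False
    then have "x mod n = x - n" using x assms by (simp add: mod_if)
    moreover have "x - n < v + L - n" using x(3) False by linarith
    ultimately show ?thesis using x by simp
  qed
qed

lemma cyc_mono: "cyc_interval n v L \<subseteq> cyc_interval n v (Suc L)"
  by (auto simp: cyc_image)

lemma CT_sub: "CT n c v \<subseteq> cyc_interval n v (c + 1)"
  unfolding CT_def using cyc_mono[of n v c] by auto

context hs begin

lemma wrap: assumes "m \<le> c - 1" shows "(\<Sum>t<m. u (n - 2 - t)) \<le> (\<Sum>t<Suc m. u (c - t))"
proof (cases "m \<le> r")
  case True
  have A: "(\<Sum>t<m. u (n - 2 - t)) \<le> real m * (1 / (real r * real w))"
    using sum_bounded_above[of "{..<m}" "\<lambda>t. u (n - 2 - t)" "1 / (real r * real w)"] u_upper by simp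
  have B: "real (Suc m) * (1 / ((real r + 1) * real w)) \<le> (\<Sum>t<Suc m. u (c - t))"
    using sum_bounded_below[of "{..<Suc m}" "1 / ((real r + 1) * real w)" "\<lambda>t. u (c - t)"] u_lower by simp
  have "real m * (real r + 1) \<le> real (Suc m) * real r" using True by (simp add: algebra_simps)
  then have "real m \<le> real (Suc m) * real r / (real r + 1)"
    by (simp add: pos_le_divide_eq add_pos_nonneg)
  also have "\<dots> = real (Suc m) / ((real r + 1) * real w) * (real r * real w)"
  proof -
    have nz: "real r + 1 \<noteq> 0" "real w \<noteq> 0" using w1 by (simp_all add: add_nonneg_pos)
    have aux: "\<And>b w x r :: real. b \<noteq> 0 \<Longrightarrow> w \<noteq> 0 \<Longrightarrow> x * r / b = x / (b * w) * (r * w)"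
      by (simp add: field_simps)
    show ?thesis by (rule aux[OF nz])
  qed
  finally have C0: "real m / (real r * real w) \<le> real (Suc m) / ((real r + 1) * real w)"
    using r_pos w1 by (simp add: pos_divide_le_eq)
  have C: "real m * (1 / (real r * real w)) \<le> real (Suc m) * (1 / ((real r + 1) * real w))"
    using C0 by simp
  show ?thesis using A B C by linarith
next
  case False
  have s1: "(\<Sum>t<m. u (n - 2 - t)) = (\<Sum>t<r. u (n - 2 - t)) + (\<Sum>t\<in>{r..<m}. u (n - 2 - t))"
    using False sum.atLeastLessThan_concat[of 0 r m "\<lambda>t. u (n - 2 - t)"] by (simp add: atLeast0LessThan)
  have s2: "(\<Sum>t<Suc m. u (c - t)) = (\<Sum>t<Suc r. u (c - t)) + (\<Sum>t\<in>{Suc r..<Suc m}. u (c - t))"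
    using False sum.atLeastLessThan_concat[of 0 "Suc r" "Suc m" "\<lambda>t. u (c - t)"] by (simp add: atLeast0LessThan)
  have s3: "(\<Sum>t\<in>{Suc r..<Suc m}. u (c - t)) = (\<Sum>t\<in>{r..<m}. u (c - 1 - t))"
    unfolding sum.atLeast_Suc_lessThan_Suc_shift comp_def by simp
  have A: "(\<Sum>t<r. u (n - 2 - t)) \<le> 1 / real w"
    using sum_bounded_above[of "{..<r}" "\<lambda>t. u (n - 2 - t)" "1 / (real r * real w)"] u_upper r_pos by simp
  have B: "1 / real w \<le> (\<Sum>t<Suc r. u (c - t))"
    using sum_bounded_below[of "{..<Suc r}" "1 / ((real r + 1) * real w)" "\<lambda>t. u (c - t)"] u_lower w1
    by (simp add: add.commute)
  have C: "(\<Sum>t\<in>{r..<m}. u (n - 2 - t)) \<le> (\<Sum>t\<in>{r..<m}. u (c - 1 - t))"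
    using assms by (intro sum_mono pointwise) auto
  show ?thesis using s1 s2 s3 A B C by linarith
qed

end



context hs begin

lemma y_nonneg: "0 \<le> hider_y n c h w i" by (simp add: y_eq u_nonneg)

lemma sum_y_u: assumes "1 \<le> a" "b \<le> n - 1"
  shows "(\<Sum>i\<in>{a..<b}. hider_y n c h w i) = (\<Sum>i\<in>{a..<b}. u i)"
  using assms by (intro sum.cong) (auto simp: y_eq)

lemma y0: "hider_y n c h w 0 = 0" by (simp add: y_eq)
lemma yn1: "hider_y n c h w (n - 1) = 0"
proof -
  have "\<not> (n - 1 \<le> n - 2)" using nc by linarith
  then show ?thesis by (simp add: y_eq)
qed

lemma main: assumes "v < n" "v \<noteq> 1"
  shows "(\<Sum>i\<in>CT n c v. hider_y n c h w i) \<le> real h / real w"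
proof -
  let ?y = "hider_y n c h w"
  have fin: "finite (cyc_interval n v (c + 1))" by (simp add: cyc_image)
  have sub: "(\<Sum>i\<in>CT n c v. ?y i) \<le> (\<Sum>i\<in>S. ?y i)" if "cyc_interval n v (c + 1) \<subseteq> S" "finite S" for S
    using that CT_sub[of n c v] by (intro sum_mono2) (auto simp: y_nonneg)
  consider (z) "v = 0" | (a) "2 \<le> v" "v + c \<le> n - 2" | (b) "2 \<le> v" "v + c = n - 1" | (c) "2 \<le> v" "n \<le> v + c"
    using assms by linarith
  then show ?thesis
  proof cases
    case z
    have e: "cyc_interval n v (c + 1) = {0..<Suc c}" using z nc by (simp add: cyc_id)
    have "(\<Sum>i\<in>{0..<Suc c}. ?y i) = ?y 0 + (\<Sum>i\<in>{Suc 0..<Suc c}. ?y i)"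
      by (intro sum.atLeast_Suc_lessThan) simp
    also have "\<dots> = (\<Sum>i\<in>{1..<Suc c}. u i)" using y0 nc sum_y_u[of 1 "Suc c"] by simp
    also have "\<dots> = real h / real w" by (rule sum_period)
    finally show ?thesis using sub[of "{0..<Suc c}"] e by simp
  next
    case a
    have e1: "cyc_interval n v (c + 1) = {v..<v + (c + 1)}" using a nc by (intro cyc_id) linarith
    have "cyc_interval n v (c + 1) \<inter> {0, n - 1} = {}" using a unfolding e1 by auto
    then have "CT n c v = cyc_interval n v c" by (simp add: CT_def)
    also have "\<dots> = {v..<v + c}" using a nc by (intro cyc_id) linarith
    finally have "(\<Sum>i\<in>CT n c v. ?y i) = (\<Sum>i\<in>{v..<v + c}. u i)"
      using a sum_y_u[of v "v + c"] by simp
    then show ?thesis using window[of v] a by simp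
  next
    case b
    have e1: "cyc_interval n v (c + 1) = {v..<Suc (v + c)}" using b nc by (simp add: cyc_id)
    have "(\<Sum>i\<in>{v..<Suc (v + c)}. ?y i) = (\<Sum>i\<in>{v..<v + c}. ?y i) + ?y (v + c)"
      by (intro sum.atLeastLessThan_Suc) simp
    also have "\<dots> = (\<Sum>i\<in>{v..<v + c}. u i)" using b yn1 sum_y_u[of v "v + c"] by simp
    also have "\<dots> = real h / real w" using window[of v] b by simp
    finally show ?thesis using sub[of "{v..<Suc (v + c)}"] e1 by simp
  next
    case c
    define m where "m = n - 1 - v"
    have m1: "m \<le> c - 1" using c assms by (simp add: m_def)
    have wr: "cyc_interval n v (c + 1) \<subseteq> {v..<n} \<union> {0..<v + (c + 1) - n}"
      using assms nc by (intro cyc_wrap) auto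
    have disj: "{v..<n} \<inter> {0..<v + (c + 1) - n} = {}" using nc by auto
    have "(\<Sum>i\<in>CT n c v. ?y i) \<le> (\<Sum>i\<in>{v..<n} \<union> {0..<v + (c + 1) - n}. ?y i)"
      using sub wr by simp
    also have "\<dots> = (\<Sum>i\<in>{v..<n}. ?y i) + (\<Sum>i\<in>{0..<v + (c + 1) - n}. ?y i)"
      using disj by (intro sum.union_disjoint) auto
    also have "(\<Sum>i\<in>{v..<n}. ?y i) = (\<Sum>t<m. u (n - 2 - t))"
    proof -
      have n1: "n = Suc (n - 1)" using nc by simp
      have "(\<Sum>i\<in>{v..<n}. ?y i) = (\<Sum>i\<in>{v..<n - 1}. ?y i) + ?y (n - 1)"
        using assms sum.atLeastLessThan_Suc[of v "n - 1" ?y] n1 by simp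
      also have "\<dots> = (\<Sum>i\<in>{v..<n - 1}. u i)" using yn1 c sum_y_u[of v "n - 1"] by simp
      also have "\<dots> = (\<Sum>t<m. u (n - 2 - t))"
      proof -
        have "m \<le> Suc (n - 2)" "Suc (n - 2) - m = v" "Suc (n - 2) = n - 1"
          using c nc assms by (auto simp: m_def)
        then show ?thesis using reindex_rev[of m "n - 2" u] by simp
      qed
      finally show ?thesis .
    qed
    also have "(\<Sum>i\<in>{0..<v + (c + 1) - n}. ?y i) = (\<Sum>i\<in>{1..<c - m}. u i)"
    proof -
      have e: "v + (c + 1) - n = c - m" "0 < c - m" using c assms m1 by (auto simp: m_def)
      have "(\<Sum>i\<in>{0..<v + (c + 1) - n}. ?y i) = ?y 0 + (\<Sum>i\<in>{Suc 0..<c - m}. ?y i)"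
        unfolding e(1) using e(2) by (intro sum.atLeast_Suc_lessThan)
      also have "\<dots> = (\<Sum>i\<in>{1..<c - m}. ?y i)" using y0 by simp
      also have "\<dots> = (\<Sum>i\<in>{1..<c - m}. u i)" using nc by (intro sum_y_u) auto
      finally show ?thesis .
    qed
    also have "(\<Sum>t<m. u (n - 2 - t)) + (\<Sum>i\<in>{1..<c - m}. u i) \<le> real h / real w"
    proof -
      have "real h / real w = (\<Sum>i\<in>{1..<Suc c}. u i)" using sum_period by simp
      also have "\<dots> = (\<Sum>i\<in>{1..<c - m}. u i) + (\<Sum>i\<in>{c - m..<Suc c}. u i)"
        using m1 c2 by (intro sum.atLeastLessThan_concat[symmetric]) auto
      also have "(\<Sum>i\<in>{c - m..<Suc c}. u i) = (\<Sum>t<Suc m. u (c - t))"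
      proof -
        have "Suc m \<le> Suc c" "Suc c - Suc m = c - m" using m1 by auto
        then show ?thesis using reindex_rev[of "Suc m" c u] by simp
      qed
      finally show ?thesis using wrap[OF m1] by simp
    qed
    finally show ?thesis .
  qed
qed

end


theorem lemma3p8:
  fixes k n c h w :: nat
  assumes "k \<ge> 2" and "n > 2 ^ k" and "c = 2 ^ k - 2"
    and "gcd c (n - 1) = 1"
    and "h > 0" and "w \<in> {1..n-2}"
    and "int h * int (n - 1) - int w * int c = 1"
    and "\<And>h' w'. h' > 0 \<Longrightarrow> w' \<in> {1..n-2} \<Longrightarrow>
            int h' * int (n - 1) - int w' * int c = 1 \<Longrightarrow> w \<le> w'"
  shows "\<forall>v \<in> {0..<n} - {1}.
           (\<Sum>i\<in>CT n c v. hider_y n c h w i) \<le> real h / real w"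
proof -
  have p4: "(4::nat) \<le> 2 ^ k"
  proof -
    have "(2::nat) ^ 2 \<le> 2 ^ k" using assms(1) by (intro power_increasing) auto
    then show ?thesis by simp
  qed
  have c2: "c \<ge> 2" using assms(3) p4 by simp
  have nc: "c + 3 \<le> n" using assms(2,3) p4 by simp
  have "int (h * (n - 1)) = int (w * c + 1)" using assms(7) by simp
  then have eq: "h * (n - 1) = w * c + 1" by (simp only: of_nat_eq_iff)
  interpret hs n c h w
    using c2 nc assms(5,6) eq by unfold_locales auto
  show ?thesis using main by auto
qed

end
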